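(* Let $H$ be a distribution function on $\mathbb{R}$ with finite variance, and for $N\ge1$ let $H^{\ast N}=H\ast\cdots\ast H$ ($N$ factors). For $n\ge 1$ let $t_n^{\ast N}$ be the Pitman estimator of $\theta$ from a sample of size $n$ from $H^{\ast N}(x-\theta)$. Then for any $N>1$ and any $n\ge 1$, $$\frac{\mathrm{var}(t_n^{\ast N})}{N}\ \ge\ \frac{\mathrm{var}(t_n^{\ast (N-1)})}{N-1}.$$
   Context: A sample of size $n$ from the population $G(x-\theta)$ ($\theta\in\mathbb{R}$ unknown) is $x_1,\ldots,x_n$ i.i.d. with $x_i-\theta\sim G$. An estimator $t$ is equivariant if $t(x_1+c,\ldots,x_n+c)=t(x_1,\ldots,x_n)+c$ for all $c$. The Pitman estimator is the equivariant estimator of minimal variance; when $G$ has finite second moment it equals $\bar x-E_0(\bar x\mid x_1-\bar x,\ldots,x_n-\bar x)$, with $E_0$ expectation under $\theta=0$. Convolution: $(F_1\ast F_2)(x)=\int F_1(x-y)\,dF_2(y)$. *)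

theory Defs
  imports "HOL-Probability.Probability"
begin

fun conv_pow :: "real measure \<Rightarrow> nat \<Rightarrow> real measure" where
  "conv_pow H 0 = return borel 0"
| "conv_pow H (Suc 0) = H"
| "conv_pow H (Suc (Suc k)) = convolution (conv_pow H (Suc k)) H"

text \<open>Sample space of an i.i.d. sample of size n from F at theta = 0.\<close>
definition sample :: "nat \<Rightarrow> real measure \<Rightarrow> (nat \<Rightarrow> real) measure" where
  "sample n F = PiM {..<n} (\<lambda>_. F)"

definition equivariant :: "nat \<Rightarrow> ((nat \<Rightarrow> real) \<Rightarrow> real) \<Rightarrow> bool" where
  "equivariant n t \<longleftrightarrow>
     (\<forall>x \<in> space (PiM {..<n} (\<lambda>_. (borel :: real measure))). \<forall>c::real.
        t (restrict (\<lambda>i. x i + c) {..<n}) = t x + c)"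

text \<open>Variance of the Pitman estimator: the minimal variance among equivariant
  (measurable, square integrable) estimators. Equivariant estimators have
  theta-independent variance, so it is computed at theta = 0.\<close>
definition pitman_var :: "nat \<Rightarrow> real measure \<Rightarrow> real" where
  "pitman_var n F = Inf {prob_space.variance (sample n F) t | t.
      t \<in> borel_measurable (sample n F) \<and> equivariant n t \<and>
      integrable (sample n F) (\<lambda>x. (t x)\<^sup>2)}"

end

theory Submission
  imports Defs
begin


lemma pyth1:
  fixes u :: "'b \<Rightarrow> real"
  assumes B: "prob_space B" and um[measurable]: "u \<in> borel_measurable B"
    and ui: "integrable B (\<lambda>b. (u b)\<^sup>2)"
  shows "(\<integral>\<^sup>+b. ennreal ((u b)\<^sup>2) \<partial>B) =
     ennreal ((\<integral>b. u b \<partial>B)\<^sup>2) + (\<integral>\<^sup>+b. ennreal ((u b - (\<integral>b. u b \<partial>B))\<^sup>2) \<partial>B)"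
proof -
  interpret prob_space B by fact
  have i1: "integrable B u" by (rule square_integrable_imp_integrable[OF um ui])
  define c where "c = (\<integral>b. u b \<partial>B)"
  have i2: "integrable B (\<lambda>b. (u b - c)\<^sup>2)"
    unfolding power2_diff using ui i1 by (intro Bochner_Integration.integrable_diff Bochner_Integration.integrable_add) auto
  have e2: "(\<integral>b. (u b - c)\<^sup>2 \<partial>B) = (\<integral>b. (u b)\<^sup>2 \<partial>B) - c\<^sup>2"
    unfolding power2_diff using ui i1 prob_space by (simp add: c_def power2_eq_square)
  have "(\<integral>\<^sup>+b. ennreal ((u b)\<^sup>2) \<partial>B) = ennreal (\<integral>b. (u b)\<^sup>2 \<partial>B)"
    by (rule nn_integral_eq_integral[OF ui]) auto
  moreover have "(\<integral>\<^sup>+b. ennreal ((u b - c)\<^sup>2) \<partial>B) = ennreal (\<integral>b. (u b - c)\<^sup>2 \<partial>B)"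
    by (rule nn_integral_eq_integral[OF i2]) auto
  moreover have "(\<integral>b. (u b - c)\<^sup>2 \<partial>B) \<ge> 0" by simp
  ultimately show ?thesis unfolding c_def[symmetric] using e2
    by (simp add: ennreal_plus[symmetric] del: ennreal_plus)
qed

lemma jensen1:
  fixes u :: "'b \<Rightarrow> real"
  assumes B: "prob_space B" and um[measurable]: "u \<in> borel_measurable B"
  shows "ennreal ((\<integral>b. u b \<partial>B)\<^sup>2) \<le> (\<integral>\<^sup>+b. ennreal ((u b)\<^sup>2) \<partial>B)"
proof (cases "integrable B (\<lambda>b. (u b)\<^sup>2)")
  case True
  then show ?thesis using pyth1[OF B um True] by simp
next
  case False
  then have "(\<integral>\<^sup>+b. ennreal (norm ((u b)\<^sup>2)) \<partial>B) = \<infinity>"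
    unfolding integrable_iff_bounded by (auto simp: less_top[symmetric])
  then show ?thesis by simp
qed

lemma pyth_prod:
  fixes \<phi> :: "'a \<times> 'b \<Rightarrow> real" and \<psi> :: "'a \<Rightarrow> real"
  assumes A: "prob_space A" and B: "prob_space B"
    and \<phi>m[measurable]: "\<phi> \<in> borel_measurable (A \<Otimes>\<^sub>M B)" and \<psi>m[measurable]: "\<psi> \<in> borel_measurable A"
    and \<phi>i: "integrable (A \<Otimes>\<^sub>M B) (\<lambda>x. (\<phi> x)\<^sup>2)"
    and ae: "AE a in A. \<psi> a = (\<integral>b. \<phi> (a,b) \<partial>B)"
  shows "(\<integral>\<^sup>+x. ennreal ((\<phi> x)\<^sup>2) \<partial>(A \<Otimes>\<^sub>M B)) =
    (\<integral>\<^sup>+a. ennreal ((\<psi> a)\<^sup>2) \<partial>A) + (\<integral>\<^sup>+x. ennreal ((\<phi> x - \<psi> (fst x))\<^sup>2) \<partial>(A \<Otimes>\<^sub>M B))"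
proof -
  interpret pair_prob_space A B using A B by (simp add: pair_prob_space_def pair_sigma_finite_def prob_space_imp_sigma_finite)
  have aei: "AE a in A. integrable B (\<lambda>b. (\<phi> (a,b))\<^sup>2)"
    using AE_integrable_fst'[OF \<phi>i] by simp
  have "(\<integral>\<^sup>+x. ennreal ((\<phi> x)\<^sup>2) \<partial>(A \<Otimes>\<^sub>M B)) = (\<integral>\<^sup>+a. \<integral>\<^sup>+b. ennreal ((\<phi> (a,b))\<^sup>2) \<partial>B \<partial>A)"
    by (rule M2.nn_integral_fst[symmetric]) simp
  also have "\<dots> = (\<integral>\<^sup>+a. ennreal ((\<psi> a)\<^sup>2) + (\<integral>\<^sup>+b. ennreal ((\<phi> (a,b) - \<psi> a)\<^sup>2) \<partial>B) \<partial>A)"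
  proof (rule nn_integral_cong_AE)
    show "AE a in A. (\<integral>\<^sup>+b. ennreal ((\<phi> (a,b))\<^sup>2) \<partial>B) = ennreal ((\<psi> a)\<^sup>2) + (\<integral>\<^sup>+b. ennreal ((\<phi> (a,b) - \<psi> a)\<^sup>2) \<partial>B)"
      using aei ae AE_space
    proof eventually_elim
      case (elim a)
      then show ?case using pyth1[OF B _ elim(1)] elim(2) by simp
    qed
  qed
  also have "\<dots> = (\<integral>\<^sup>+a. ennreal ((\<psi> a)\<^sup>2) \<partial>A) + (\<integral>\<^sup>+a. \<integral>\<^sup>+b. ennreal ((\<phi> (a,b) - \<psi> a)\<^sup>2) \<partial>B \<partial>A)"
    by (rule nn_integral_add) auto
  also have "(\<integral>\<^sup>+a. \<integral>\<^sup>+b. ennreal ((\<phi> (a,b) - \<psi> a)\<^sup>2) \<partial>B \<partial>A) = (\<integral>\<^sup>+x. ennreal ((\<phi> x - \<psi> (fst x))\<^sup>2) \<partial>(A \<Otimes>\<^sub>M B))"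
    by (subst M2.nn_integral_fst[symmetric]) auto
  finally show ?thesis .
qed

lemma swap_nn:
  fixes g :: "('a \<times> 'b) \<times> 'b \<Rightarrow> ennreal"
  assumes M: "prob_space M" and Q: "prob_space Q"
    and gm[measurable]: "g \<in> borel_measurable ((M \<Otimes>\<^sub>M Q) \<Otimes>\<^sub>M Q)"
  shows "(\<integral>\<^sup>+x. g ((fst (fst x), snd x), snd (fst x)) \<partial>((M \<Otimes>\<^sub>M Q) \<Otimes>\<^sub>M Q)) = (\<integral>\<^sup>+x. g x \<partial>((M \<Otimes>\<^sub>M Q) \<Otimes>\<^sub>M Q))"
proof -
  interpret MQ: pair_prob_space M Q using M Q by (simp add: pair_prob_space_def pair_sigma_finite_def prob_space_imp_sigma_finite)
  interpret QQ: pair_prob_space Q Q using Q by (simp add: pair_prob_space_def pair_sigma_finite_def prob_space_imp_sigma_finite)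
  interpret T: pair_prob_space "M \<Otimes>\<^sub>M Q" Q using M Q
    by (simp add: pair_prob_space_def pair_sigma_finite_def prob_space_imp_sigma_finite MQ.prob_space_axioms)
  have "(\<integral>\<^sup>+x. g ((fst (fst x), snd x), snd (fst x)) \<partial>((M \<Otimes>\<^sub>M Q) \<Otimes>\<^sub>M Q))
      = (\<integral>\<^sup>+w. \<integral>\<^sup>+y'. g ((fst w, y'), snd w) \<partial>Q \<partial>(M \<Otimes>\<^sub>M Q))"
    by (subst MQ.M2.nn_integral_fst[symmetric]) auto
  also have "\<dots> = (\<integral>\<^sup>+z. \<integral>\<^sup>+y. \<integral>\<^sup>+y'. g ((z, y'), y) \<partial>Q \<partial>Q \<partial>M)"
    by (subst MQ.M2.nn_integral_fst[symmetric]) auto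
  also have "\<dots> = (\<integral>\<^sup>+z. \<integral>\<^sup>+y'. \<integral>\<^sup>+y. g ((z, y'), y) \<partial>Q \<partial>Q \<partial>M)"
  proof (rule nn_integral_cong)
    fix z assume z: "z \<in> space M"
    show "(\<integral>\<^sup>+y. \<integral>\<^sup>+y'. g ((z, y'), y) \<partial>Q \<partial>Q) = (\<integral>\<^sup>+y'. \<integral>\<^sup>+y. g ((z, y'), y) \<partial>Q \<partial>Q)"
      by (rule QQ.Fubini'[symmetric]) (use z in auto)
  qed
  also have "\<dots> = (\<integral>\<^sup>+w. \<integral>\<^sup>+y. g (w, y) \<partial>Q \<partial>(M \<Otimes>\<^sub>M Q))"
    by (subst MQ.M2.nn_integral_fst[symmetric]) auto
  also have "\<dots> = (\<integral>\<^sup>+x. g x \<partial>((M \<Otimes>\<^sub>M Q) \<Otimes>\<^sub>M Q))"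
    by (subst MQ.M2.nn_integral_fst[symmetric]) auto
  finally show ?thesis .
qed

lemma AE_lift_fst:
  assumes Q: "prob_space Q" and ae: "AE z in M. P z"
  shows "AE x in M \<Otimes>\<^sub>M Q. P (fst x)"
proof -
  interpret Q: prob_space Q by fact
  from ae obtain N where N: "{z\<in>space M. \<not> P z} \<subseteq> N" "N \<in> sets M" "emeasure M N = 0"
    by (auto elim: AE_E)
  have "emeasure (M \<Otimes>\<^sub>M Q) (N \<times> space Q) = emeasure M N * emeasure Q (space Q)"
    using N by (intro Q.emeasure_pair_measure_Times) auto
  then have "N \<times> space Q \<in> null_sets (M \<Otimes>\<^sub>M Q)" using N by (auto simp: null_sets_def)
  moreover have "{x\<in>space (M \<Otimes>\<^sub>M Q). \<not> P (fst x)} \<subseteq> N \<times> space Q"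
    using N(1) by (auto simp: space_pair_measure)
  ultimately show ?thesis by (rule AE_I')
qed

lemma sq_integrable_iff:
  fixes u :: "'b \<Rightarrow> real"
  assumes "u \<in> borel_measurable B"
  shows "integrable B (\<lambda>x. (u x)\<^sup>2) \<longleftrightarrow> (\<integral>\<^sup>+x. ennreal ((u x)\<^sup>2) \<partial>B) < \<infinity>"
  using assms by (simp add: integrable_iff_bounded)



lemma core:
  fixes R :: "'a measure" and pl :: "'a \<Rightarrow> 'a \<Rightarrow> 'a" and F f g :: "'a \<Rightarrow> real"
  assumes M: "prob_space M" and Q: "prob_space Q"
    and sM[measurable_cong]: "sets M = sets R" and sQ[measurable_cong]: "sets Q = sets R"
    and plm: "(\<lambda>(x,y). pl x y) \<in> measurable (R \<Otimes>\<^sub>M R) R"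
    and comm: "\<And>z y y'. z \<in> space R \<Longrightarrow> y \<in> space R \<Longrightarrow> y' \<in> space R \<Longrightarrow> pl (pl z y) y' = pl (pl z y') y"
    and Fm[measurable]: "F \<in> borel_measurable R" and fm[measurable]: "f \<in> borel_measurable R"
    and gm[measurable]: "g \<in> borel_measurable R"
    and Fi: "integrable (distr (distr (M \<Otimes>\<^sub>M Q) R (\<lambda>(x,y). pl x y) \<Otimes>\<^sub>M Q) R (\<lambda>(x,y). pl x y)) (\<lambda>x. (F x)\<^sup>2)"
    and fae: "AE w in distr (M \<Otimes>\<^sub>M Q) R (\<lambda>(x,y). pl x y). f w = (\<integral>y. F (pl w y) \<partial>Q)"
    and gae: "AE z in M. g z = (\<integral>y. f (pl z y) \<partial>Q)"
  shows "2 * (\<integral>\<^sup>+w. ennreal ((f w)\<^sup>2) \<partial>distr (M \<Otimes>\<^sub>M Q) R (\<lambda>(x,y). pl x y))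
     \<le> (\<integral>\<^sup>+w. ennreal ((F w)\<^sup>2) \<partial>distr (distr (M \<Otimes>\<^sub>M Q) R (\<lambda>(x,y). pl x y) \<Otimes>\<^sub>M Q) R (\<lambda>(x,y). pl x y))
       + (\<integral>\<^sup>+z. ennreal ((g z)\<^sup>2) \<partial>M)"
proof -
  have plm'[measurable (raw)]: "(\<lambda>x. pl (a x) (b x)) \<in> measurable N R"
    if [measurable]: "a \<in> measurable N R" "b \<in> measurable N R" for a b and N :: "'c measure"
    using measurable_compose[OF measurable_Pair[OF that] plm] by simp
  interpret MQ: pair_prob_space M Q using M Q by (simp add: pair_prob_space_def pair_sigma_finite_def prob_space_imp_sigma_finite)
  interpret T: pair_prob_space "M \<Otimes>\<^sub>M Q" Q using M Q
    by (simp add: pair_prob_space_def pair_sigma_finite_def prob_space_imp_sigma_finite MQ.prob_space_axioms)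
  define P where "P = distr (M \<Otimes>\<^sub>M Q) R (\<lambda>(x,y). pl x y)"
  define T where "T = (M \<Otimes>\<^sub>M Q) \<Otimes>\<^sub>M Q"
  define G where "G x = F (pl (pl (fst (fst x)) (snd (fst x))) (snd x))" for x
  define H where "H x = f (pl (fst x) (snd x))" for x
  have sP[measurable_cong]: "sets P = sets R" by (simp add: P_def)
  have Gm[measurable]: "G \<in> borel_measurable T" unfolding G_def T_def by measurable
  have Hm[measurable]: "H \<in> borel_measurable (M \<Otimes>\<^sub>M Q)" unfolding H_def by measurable
  have PQ: "P \<Otimes>\<^sub>M Q = distr T (R \<Otimes>\<^sub>M Q) (\<lambda>(x,y). ((\<lambda>(a,b). pl a b) x, y))"
  proof -
    have "P \<Otimes>\<^sub>M distr Q Q (\<lambda>x. x) = distr T (R \<Otimes>\<^sub>M Q) (\<lambda>(x,y). ((\<lambda>(a,b). pl a b) x, y))"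
      unfolding P_def T_def
      by (rule pair_measure_distr) (auto simp: distr_id MQ.M2.sigma_finite_measure_axioms)
    then show ?thesis by (simp add: distr_id)
  qed
  have p2: "distr (P \<Otimes>\<^sub>M Q) R (\<lambda>(x,y). pl x y) = distr T R (\<lambda>x. pl (pl (fst (fst x)) (snd (fst x))) (snd x))"
    unfolding PQ by (subst distr_distr) (auto simp: T_def comp_def split_beta')
  have Tprob: "prob_space T" unfolding T_def by (rule T.prob_space_axioms)
  have eF: "(\<integral>\<^sup>+w. ennreal ((F w)\<^sup>2) \<partial>distr (P \<Otimes>\<^sub>M Q) R (\<lambda>(x,y). pl x y)) = (\<integral>\<^sup>+x. ennreal ((G x)\<^sup>2) \<partial>T)"
    unfolding p2 by (subst nn_integral_distr) (auto simp: G_def T_def)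
  have Gi2: "integrable T (\<lambda>x. (G x)\<^sup>2)"
    using Fi unfolding P_def[symmetric] p2 by (subst (asm) integrable_distr_eq) (auto simp: G_def T_def)
  have Gfin: "(\<integral>\<^sup>+x. ennreal ((G x)\<^sup>2) \<partial>T) < \<infinity>" using Gi2 sq_integrable_iff[OF Gm] by simp
  have Gi: "integrable T G" by (rule finite_measure.square_integrable_imp_integrable[OF prob_space.finite_measure[OF Tprob] Gm Gi2])
  have eP: "(\<integral>\<^sup>+w. ennreal ((f w)\<^sup>2) \<partial>P) = (\<integral>\<^sup>+x. ennreal ((H x)\<^sup>2) \<partial>(M \<Otimes>\<^sub>M Q))"
    unfolding P_def by (subst nn_integral_distr) (auto simp: H_def split_beta')
  have aeH: "AE x in M \<Otimes>\<^sub>M Q. H x = (\<integral>y'. G (x, y') \<partial>Q)"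
    using AE_distrD[OF _ fae] by (simp add: H_def G_def split_beta')
  have e3: "(\<integral>\<^sup>+x. ennreal ((G x)\<^sup>2) \<partial>T) = (\<integral>\<^sup>+x. ennreal ((H x)\<^sup>2) \<partial>(M \<Otimes>\<^sub>M Q)) + (\<integral>\<^sup>+x. ennreal ((G x - H (fst x))\<^sup>2) \<partial>T)"
    unfolding T_def by (rule pyth_prod[OF MQ.prob_space_axioms Q]) (use Gi2 aeH Gm[unfolded T_def] in \<open>auto simp: T_def\<close>)
  have Hfin: "(\<integral>\<^sup>+x. ennreal ((H x)\<^sup>2) \<partial>(M \<Otimes>\<^sub>M Q)) < \<infinity>"
    using Gfin unfolding e3 by (auto simp: less_top[symmetric] ennreal_add_eq_top)
  have Hi2: "integrable (M \<Otimes>\<^sub>M Q) (\<lambda>x. (H x)\<^sup>2)" using Hfin sq_integrable_iff[OF Hm] by simp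
  have Hi: "integrable (M \<Otimes>\<^sub>M Q) H"
    by (rule finite_measure.square_integrable_imp_integrable[OF prob_space.finite_measure[OF MQ.prob_space_axioms] Hm Hi2])
  have e4: "(\<integral>\<^sup>+x. ennreal ((H x)\<^sup>2) \<partial>(M \<Otimes>\<^sub>M Q)) = (\<integral>\<^sup>+z. ennreal ((g z)\<^sup>2) \<partial>M) + (\<integral>\<^sup>+x. ennreal ((H x - g (fst x))\<^sup>2) \<partial>(M \<Otimes>\<^sub>M Q))"
    by (rule pyth_prod[OF M Q Hm _ Hi2]) (use gae in \<open>auto simp: H_def\<close>)
  define \<phi> where "\<phi> x = G x - H (fst (fst x), snd x)" for x
  have \<phi>m[measurable]: "\<phi> \<in> borel_measurable T" unfolding \<phi>_def T_def H_def G_def by measurable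
  have e5: "(\<integral>\<^sup>+x. ennreal ((\<phi> x)\<^sup>2) \<partial>T) = (\<integral>\<^sup>+x. ennreal ((G x - H (fst x))\<^sup>2) \<partial>T)"
  proof -
    have "(\<integral>\<^sup>+x. ennreal ((\<phi> x)\<^sup>2) \<partial>T) = (\<integral>\<^sup>+x. (\<lambda>x. ennreal ((G x - H (fst x))\<^sup>2)) ((fst (fst x), snd x), snd (fst x)) \<partial>T)"
      by (rule nn_integral_cong) (auto simp: \<phi>_def G_def T_def space_pair_measure comm sets_eq_imp_space_eq[OF sM] sets_eq_imp_space_eq[OF sQ])
    also have "\<dots> = (\<integral>\<^sup>+x. ennreal ((G x - H (fst x))\<^sup>2) \<partial>T)"
      unfolding T_def by (rule swap_nn[OF M Q]) (use Gm[unfolded T_def] in auto)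
    finally show ?thesis .
  qed
  have \<phi>fin: "(\<integral>\<^sup>+x. ennreal ((\<phi> x)\<^sup>2) \<partial>T) < \<infinity>"
    using Gfin unfolding e3 e5 by (auto simp: less_top[symmetric] ennreal_add_eq_top)
  have \<phi>i2: "integrable T (\<lambda>x. (\<phi> x)\<^sup>2)" using \<phi>fin sq_integrable_iff[OF \<phi>m] by simp
  have aeGi: "AE x in M \<Otimes>\<^sub>M Q. integrable Q (\<lambda>y'. G (x, y'))"
    using T.AE_integrable_fst'[OF Gi[unfolded T_def]] by simp
  have aeHi: "AE z in M. integrable Q (\<lambda>y. H (z, y))"
    using MQ.AE_integrable_fst'[OF Hi] by simp
  have ae\<psi>: "AE x in M \<Otimes>\<^sub>M Q. H x - g (fst x) = (\<integral>y'. \<phi> (x, y') \<partial>Q)"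
    using aeGi aeH AE_lift_fst[OF Q aeHi] AE_lift_fst[OF Q gae]
  proof eventually_elim
    case (elim x)
    have "(\<integral>y'. \<phi> (x, y') \<partial>Q) = (\<integral>y'. G (x, y') \<partial>Q) - (\<integral>y'. H (fst x, y') \<partial>Q)"
      unfolding \<phi>_def using elim by simp
    then show ?case using elim by (simp add: H_def)
  qed
  have e6: "(\<integral>\<^sup>+x. ennreal ((\<phi> x)\<^sup>2) \<partial>T) = (\<integral>\<^sup>+x. ennreal ((H x - g (fst x))\<^sup>2) \<partial>(M \<Otimes>\<^sub>M Q)) + (\<integral>\<^sup>+x. ennreal ((\<phi> x - (H (fst x) - g (fst (fst x))))\<^sup>2) \<partial>T)"
    unfolding T_def by (rule pyth_prod[OF MQ.prob_space_axioms Q _ _ _ ae\<psi>]) (use \<phi>i2 \<phi>m[unfolded T_def] in \<open>auto simp: T_def\<close>)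
  define B where "B = (\<integral>\<^sup>+x. ennreal ((H x)\<^sup>2) \<partial>(M \<Otimes>\<^sub>M Q))"
  define C where "C = (\<integral>\<^sup>+z. ennreal ((g z)\<^sup>2) \<partial>M)"
  define D where "D = (\<integral>\<^sup>+x. ennreal ((G x - H (fst x))\<^sup>2) \<partial>T)"
  define E where "E = (\<integral>\<^sup>+x. ennreal ((H x - g (fst x))\<^sup>2) \<partial>(M \<Otimes>\<^sub>M Q))"
  define Rr where "Rr = (\<integral>\<^sup>+x. ennreal ((\<phi> x - (H (fst x) - g (fst (fst x))))\<^sup>2) \<partial>T)"
  have DE: "D = E + Rr" using e5 e6 unfolding D_def E_def Rr_def by simp
  have ineq: "E \<le> D" unfolding DE le_iff_add by blast
  have BCE: "B = C + E" using e4 unfolding B_def C_def E_def .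
  have "2 * B = B + (C + E)" using BCE by (simp add: mult_2)
  also have "\<dots> \<le> B + (C + D)" using ineq by (intro add_left_mono) simp
  also have "\<dots> = (B + D) + C" by (simp add: ac_simps)
  finally have fin: "2 * B \<le> (B + D) + C" .
  show ?thesis
    unfolding P_def[symmetric] eF eP e3 using fin unfolding B_def C_def D_def .
qed

lemma twolevel:
  fixes R :: "'a measure" and pl :: "'a \<Rightarrow> 'a \<Rightarrow> 'a" and F :: "'a \<Rightarrow> real"
  assumes M: "prob_space M" and Q: "prob_space Q"
    and sM[measurable_cong]: "sets M = sets R" and sQ[measurable_cong]: "sets Q = sets R"
    and plm: "(\<lambda>(x,y). pl x y) \<in> measurable (R \<Otimes>\<^sub>M R) R"
    and Fm[measurable]: "F \<in> borel_measurable R"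
    and Fi: "integrable (distr (M \<Otimes>\<^sub>M Q) R (\<lambda>(x,y). pl x y)) (\<lambda>x. (F x)\<^sup>2)"
  shows "AE w in M. integrable Q (\<lambda>y. F (pl w y))"
    and "f \<in> borel_measurable R \<Longrightarrow> AE w in M. f w = (\<integral>y. F (pl w y) \<partial>Q) \<Longrightarrow> integrable M (\<lambda>x. (f x)\<^sup>2)"
    and "f \<in> borel_measurable R \<Longrightarrow> AE w in M. f w = (\<integral>y. F (pl w y) \<partial>Q) \<Longrightarrow>
          (\<integral>x. F x \<partial>distr (M \<Otimes>\<^sub>M Q) R (\<lambda>(x,y). pl x y)) = (\<integral>x. f x \<partial>M)"
proof -
  have plm'[measurable (raw)]: "(\<lambda>x. pl (a x) (b x)) \<in> measurable N R"
    if [measurable]: "a \<in> measurable N R" "b \<in> measurable N R" for a b and N :: "'c measure"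
    using measurable_compose[OF measurable_Pair[OF that] plm] by simp
  interpret MQ: pair_prob_space M Q using M Q by (simp add: pair_prob_space_def pair_sigma_finite_def prob_space_imp_sigma_finite)
  define G where "G x = F (pl (fst x) (snd x))" for x
  have Gm[measurable]: "G \<in> borel_measurable (M \<Otimes>\<^sub>M Q)" unfolding G_def by measurable
  have Gi2: "integrable (M \<Otimes>\<^sub>M Q) (\<lambda>x. (G x)\<^sup>2)"
    using Fi by (subst (asm) integrable_distr_eq) (auto simp: G_def split_beta')
  have Gi: "integrable (M \<Otimes>\<^sub>M Q) G"
    by (rule finite_measure.square_integrable_imp_integrable[OF prob_space.finite_measure[OF MQ.prob_space_axioms] Gm Gi2])
  show ae: "AE w in M. integrable Q (\<lambda>y. F (pl w y))"
    using MQ.AE_integrable_fst'[OF Gi] by (simp add: G_def)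
  assume fm[measurable]: "f \<in> borel_measurable R" and fae: "AE w in M. f w = (\<integral>y. F (pl w y) \<partial>Q)"
  {
    have "(\<integral>\<^sup>+x. ennreal ((G x)\<^sup>2) \<partial>(M \<Otimes>\<^sub>M Q)) = (\<integral>\<^sup>+a. ennreal ((f a)\<^sup>2) \<partial>M) + (\<integral>\<^sup>+x. ennreal ((G x - f (fst x))\<^sup>2) \<partial>(M \<Otimes>\<^sub>M Q))"
      by (rule pyth_prod[OF M Q Gm _ Gi2]) (use fae in \<open>auto simp: G_def\<close>)
    moreover have "(\<integral>\<^sup>+x. ennreal ((G x)\<^sup>2) \<partial>(M \<Otimes>\<^sub>M Q)) < \<infinity>" using Gi2 sq_integrable_iff[OF Gm] by simp
    ultimately have "(\<integral>\<^sup>+a. ennreal ((f a)\<^sup>2) \<partial>M) < \<infinity>" by (auto simp: less_top[symmetric] ennreal_add_eq_top)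
    then show "integrable M (\<lambda>x. (f x)\<^sup>2)" using sq_integrable_iff[of f M] by simp
  }
  have "(\<integral>x. F x \<partial>distr (M \<Otimes>\<^sub>M Q) R (\<lambda>(x,y). pl x y)) = (\<integral>x. G x \<partial>(M \<Otimes>\<^sub>M Q))"
    by (subst integral_distr) (auto simp: G_def[abs_def] split_beta')
  also have "\<dots> = (\<integral>z. (\<integral>y. G (z, y) \<partial>Q) \<partial>M)"
    by (rule MQ.integral_fst'[OF Gi, symmetric])
  also have "\<dots> = (\<integral>z. f z \<partial>M)"
    by (rule integral_cong_AE) (use fae in \<open>auto simp: G_def\<close>)
  finally show "(\<integral>x. F x \<partial>distr (M \<Otimes>\<^sub>M Q) R (\<lambda>(x,y). pl x y)) = (\<integral>x. f x \<partial>M)" .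
qed

lemma convex_seq:
  fixes s :: "nat \<Rightarrow> real" and N :: nat
  assumes N: "N > 1" and cv: "\<And>m. 1 \<le> m \<Longrightarrow> m < N \<Longrightarrow> 2 * s m \<le> s (Suc m) + s (m - 1)"
  shows "real N * (s (N - 1) - s 0) \<le> real (N - 1) * (s N - s 0)"
proof -
  define d where "d m = s (Suc m) - s m" for m
  have dmono: "d m \<le> d (N - 1)" if "m \<le> N - 1" for m
    using that
  proof (induction "N - 1 - m" arbitrary: m)
    case 0 then have "m = N - 1" by simp
    then show ?case by simp
  next
    case (Suc k)
    then have "d (Suc m) \<le> d (N - 1)" by simp
    moreover have "Suc m < N" using Suc.hyps Suc.prems by simp
    then have "d m \<le> d (Suc m)" using cv[of "Suc m"] by (simp add: d_def)
    ultimately show ?case by simp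
  qed
  have tel: "s (N - 1) - s 0 = (\<Sum>m<N - 1. d m)" unfolding d_def by (simp add: sum_lessThan_telescope)
  have "(\<Sum>m<N - 1. d m) \<le> (\<Sum>m<N - 1. d (N - 1))" by (intro sum_mono dmono) simp
  then have le1: "s (N - 1) - s 0 \<le> real (N - 1) * d (N - 1)" using tel by simp
  have dN: "d (N - 1) = s N - s (N - 1)" using N by (simp add: d_def)
  have rN: "real N = real (N - 1) + 1" using N by simp
  show ?thesis using le1 unfolding dN rN by (simp add: algebra_simps)
qed



lemma zip_PiM:
  fixes A B :: "real measure"
  assumes A: "prob_space A" and sA: "sets A = sets borel" and B: "prob_space B" and sB: "sets B = sets borel"
    and I: "finite I"
  shows "distr (PiM I (\<lambda>_. A) \<Otimes>\<^sub>M PiM I (\<lambda>_. B)) (PiM I (\<lambda>_. A \<Otimes>\<^sub>M B)) (\<lambda>(a,b). \<lambda>i\<in>I. (a i, b i))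
     = PiM I (\<lambda>_. A \<Otimes>\<^sub>M B)"
proof -
  interpret A: prob_space A by fact
  interpret B: prob_space B by fact
  interpret AB: pair_prob_space A B ..
  interpret PA: product_prob_space "\<lambda>_. A" by standard
  interpret PB: product_prob_space "\<lambda>_. B" by standard
  interpret PAB: product_prob_space "\<lambda>_. A \<Otimes>\<^sub>M B" by standard
  have pA: "prob_space (PiM I (\<lambda>_. A))" by (rule prob_space_PiM) (rule A)
  have pB: "prob_space (PiM I (\<lambda>_. B))" by (rule prob_space_PiM) (rule B)
  interpret PP: pair_prob_space "PiM I (\<lambda>_. A)" "PiM I (\<lambda>_. B)"
    by (simp add: pair_prob_space_def pair_sigma_finite_def prob_space_imp_sigma_finite pA pB)
  have spA: "space A = UNIV" using sets_eq_imp_space_eq[OF sA] by simp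
  have spB: "space B = UNIV" using sets_eq_imp_space_eq[OF sB] by simp
  define E where "E = {a \<times> b | a b. a \<in> sets A \<and> b \<in> sets B}"
  define \<Omega> where "\<Omega> = (UNIV :: (real \<times> real) set)"
  define P where "P = {{f\<in>(\<Pi>\<^sub>E i\<in>I. \<Omega>). \<forall>i\<in>j. f i \<in> X i} | X j. j \<in> {I} \<and> X \<in> Pi j (\<lambda>_. E)}"
  have sAB: "sets (A \<Otimes>\<^sub>M B) = sets (sigma \<Omega> E)"
    unfolding sets_pair_measure spA spB E_def \<Omega>_def
    by (subst sets_measure_of) auto
  have sPi: "sets (PiM I (\<lambda>_. A \<Otimes>\<^sub>M B)) = sets (sigma (\<Pi>\<^sub>E i\<in>I. \<Omega>) P)"
  proof -
    have "sets (PiM I (\<lambda>_. A \<Otimes>\<^sub>M B)) = sets (PiM I (\<lambda>_. sigma \<Omega> E))"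
      by (rule sets_PiM_cong) (auto simp: sAB)
    also have "\<dots> = sets (sigma (\<Pi>\<^sub>E i\<in>I. \<Omega>) P)"
      unfolding P_def
    proof (rule sets_PiM_sigma)
      show "\<exists>S\<subseteq>E. countable S \<and> \<Omega> = \<Union> S" for i
        by (intro exI[of _ "{UNIV \<times> UNIV}"]) (auto simp: E_def \<Omega>_def sA sB intro!: exI[of _ UNIV])
    qed (auto simp: \<Omega>_def I)
    finally show ?thesis .
  qed
  have PPow: "P \<subseteq> Pow (\<Pi>\<^sub>E i\<in>I. \<Omega>)" unfolding P_def by auto
  have sP: "sets (sigma (\<Pi>\<^sub>E i\<in>I. \<Omega>) P) = sigma_sets (\<Pi>\<^sub>E i\<in>I. \<Omega>) P"
    by (rule sets_measure_of[OF PPow])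
  have Pchar: "Z \<in> P \<longleftrightarrow> (\<exists>S T. (\<forall>i\<in>I. S i \<in> sets A \<and> T i \<in> sets B) \<and> Z = (\<Pi>\<^sub>E i\<in>I. S i \<times> T i))" for Z
  proof
    assume "Z \<in> P"
    then obtain X where X: "X \<in> Pi I (\<lambda>_. E)" "Z = {f\<in>(\<Pi>\<^sub>E i\<in>I. \<Omega>). \<forall>i\<in>I. f i \<in> X i}"
      unfolding P_def by auto
    have "\<forall>i\<in>I. \<exists>st. fst st \<in> sets A \<and> snd st \<in> sets B \<and> X i = fst st \<times> snd st"
      using X(1) unfolding E_def by force
    then obtain st where st: "\<And>i. i \<in> I \<Longrightarrow> fst (st i) \<in> sets A \<and> snd (st i) \<in> sets B \<and> X i = fst (st i) \<times> snd (st i)"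
      by metis
    show "\<exists>S T. (\<forall>i\<in>I. S i \<in> sets A \<and> T i \<in> sets B) \<and> Z = (\<Pi>\<^sub>E i\<in>I. S i \<times> T i)"
      by (intro exI[of _ "\<lambda>i. fst (st i)"] exI[of _ "\<lambda>i. snd (st i)"]) (use st in \<open>auto simp: X(2) \<Omega>_def PiE_def Pi_def\<close>)
  next
    assume "\<exists>S T. (\<forall>i\<in>I. S i \<in> sets A \<and> T i \<in> sets B) \<and> Z = (\<Pi>\<^sub>E i\<in>I. S i \<times> T i)"
    then obtain S T where ST: "\<forall>i\<in>I. S i \<in> sets A \<and> T i \<in> sets B" "Z = (\<Pi>\<^sub>E i\<in>I. S i \<times> T i)" by blast
    show "Z \<in> P" unfolding P_def
      by (intro CollectI exI[of _ "\<lambda>i. S i \<times> T i"] exI[of _ I]) (use ST in \<open>auto simp: E_def \<Omega>_def PiE_def Pi_def\<close>)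
  qed
  define zp where "zp = (\<lambda>x. \<lambda>i\<in>I. (fst x i :: real, snd x i :: real))"
  have zpe: "(\<lambda>(a,b). \<lambda>i\<in>I. (a i :: real, b i :: real)) = zp" unfolding zp_def by auto
  have zpm: "zp \<in> measurable (PiM I (\<lambda>_. A) \<Otimes>\<^sub>M PiM I (\<lambda>_. B)) (PiM I (\<lambda>_. A \<Otimes>\<^sub>M B))"
    unfolding zp_def by measurable
  have spO: "space (PiM I (\<lambda>_. A \<Otimes>\<^sub>M B)) = (\<Pi>\<^sub>E i\<in>I. \<Omega>)"
    by (simp add: space_PiM space_pair_measure spA spB \<Omega>_def)
  show ?thesis unfolding zpe
  proof (rule measure_eqI_generator_eq[where E=P and \<Omega>="\<Pi>\<^sub>E i\<in>I. \<Omega>" and A="\<lambda>_. \<Pi>\<^sub>E i\<in>I. \<Omega>"])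
    show "Int_stable P"
    proof (rule Int_stableI)
      fix a b assume "a \<in> P" "b \<in> P"
      then obtain S T S' T' where "\<forall>i\<in>I. S i \<in> sets A \<and> T i \<in> sets B" "a = (\<Pi>\<^sub>E i\<in>I. S i \<times> T i)"
        "\<forall>i\<in>I. S' i \<in> sets A \<and> T' i \<in> sets B" "b = (\<Pi>\<^sub>E i\<in>I. S' i \<times> T' i)"
        unfolding Pchar by blast
      then show "a \<inter> b \<in> P" unfolding Pchar
        apply -
        apply (rule exI[of _ "\<lambda>i. S i \<inter> S' i"], rule exI[of _ "\<lambda>i. T i \<inter> T' i"])
        by (auto simp: PiE_def Pi_def mem_Times_iff)
    qed
    show "P \<subseteq> Pow (\<Pi>\<^sub>E i\<in>I. \<Omega>)" by fact
    show "sets (distr (PiM I (\<lambda>_. A) \<Otimes>\<^sub>M PiM I (\<lambda>_. B)) (PiM I (\<lambda>_. A \<Otimes>\<^sub>M B)) zp) = sigma_sets (\<Pi>\<^sub>E i\<in>I. \<Omega>) P"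
      using sPi sP by simp
    show "sets (PiM I (\<lambda>_. A \<Otimes>\<^sub>M B)) = sigma_sets (\<Pi>\<^sub>E i\<in>I. \<Omega>) P" using sPi sP by simp
    have "(\<Pi>\<^sub>E i\<in>I. \<Omega>) \<in> P" unfolding Pchar
      by (rule exI[of _ "\<lambda>_. UNIV"], rule exI[of _ "\<lambda>_. UNIV"]) (auto simp: \<Omega>_def sA sB)
    then show "range (\<lambda>_. \<Pi>\<^sub>E i\<in>I. \<Omega>) \<subseteq> P" by auto
    show "(\<Union>i. \<Pi>\<^sub>E i\<in>I. \<Omega>) = (\<Pi>\<^sub>E i\<in>I. \<Omega>)" by simp
    show "emeasure (distr (PiM I (\<lambda>_. A) \<Otimes>\<^sub>M PiM I (\<lambda>_. B)) (PiM I (\<lambda>_. A \<Otimes>\<^sub>M B)) zp) (\<Pi>\<^sub>E i\<in>I. \<Omega>) \<noteq> \<infinity>" for i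
    proof -
      interpret D: prob_space "distr (PiM I (\<lambda>_. A) \<Otimes>\<^sub>M PiM I (\<lambda>_. B)) (PiM I (\<lambda>_. A \<Otimes>\<^sub>M B)) zp"
        by (rule PP.prob_space_distr[OF zpm])
      show ?thesis by simp
    qed
    fix Z assume "Z \<in> P"
    then obtain S T where ST: "\<And>i. i \<in> I \<Longrightarrow> S i \<in> sets A \<and> T i \<in> sets B" and Z: "Z = (\<Pi>\<^sub>E i\<in>I. S i \<times> T i)"
      unfolding Pchar by blast
    have ZS: "Z \<in> sets (PiM I (\<lambda>_. A \<Otimes>\<^sub>M B))" unfolding Z using ST by (intro sets_PiM_I_finite I) auto
    have pre: "zp -` Z \<inter> space (PiM I (\<lambda>_. A) \<Otimes>\<^sub>M PiM I (\<lambda>_. B)) = (\<Pi>\<^sub>E i\<in>I. S i) \<times> (\<Pi>\<^sub>E i\<in>I. T i)"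
      unfolding Z zp_def by (auto simp: space_pair_measure space_PiM spA spB PiE_def Pi_def extensional_def)
    have "emeasure (distr (PiM I (\<lambda>_. A) \<Otimes>\<^sub>M PiM I (\<lambda>_. B)) (PiM I (\<lambda>_. A \<Otimes>\<^sub>M B)) zp) Z
        = emeasure (PiM I (\<lambda>_. A) \<Otimes>\<^sub>M PiM I (\<lambda>_. B)) ((\<Pi>\<^sub>E i\<in>I. S i) \<times> (\<Pi>\<^sub>E i\<in>I. T i))"
      by (subst emeasure_distr[OF zpm ZS]) (simp add: pre)
    also have "\<dots> = emeasure (PiM I (\<lambda>_. A)) (\<Pi>\<^sub>E i\<in>I. S i) * emeasure (PiM I (\<lambda>_. B)) (\<Pi>\<^sub>E i\<in>I. T i)"
      using ST by (intro sigma_finite_measure.emeasure_pair_measure_Times[OF prob_space_imp_sigma_finite[OF pB]] sets_PiM_I_finite I) auto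
    also have "\<dots> = (\<Prod>i\<in>I. emeasure A (S i)) * (\<Prod>i\<in>I. emeasure B (T i))"
      using ST by (simp add: PA.emeasure_PiM PB.emeasure_PiM I)
    also have "\<dots> = (\<Prod>i\<in>I. emeasure (A \<Otimes>\<^sub>M B) (S i \<times> T i))"
      using ST by (simp add: sigma_finite_measure.emeasure_pair_measure_Times[OF prob_space_imp_sigma_finite[OF B]] prod.distrib)
    also have "\<dots> = emeasure (PiM I (\<lambda>_. A \<Otimes>\<^sub>M B)) Z"
      unfolding Z using ST I by (subst PAB.emeasure_PiM) auto
    finally show "emeasure (distr (PiM I (\<lambda>_. A) \<Otimes>\<^sub>M PiM I (\<lambda>_. B)) (PiM I (\<lambda>_. A \<Otimes>\<^sub>M B)) zp) Z = emeasure (PiM I (\<lambda>_. A \<Otimes>\<^sub>M B)) Z" .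
  qed
qed

definition RR :: "nat \<Rightarrow> (nat \<Rightarrow> real) measure" where "RR n = PiM {..<n} (\<lambda>_. borel)"
definition addv :: "nat \<Rightarrow> (nat \<Rightarrow> real) \<Rightarrow> (nat \<Rightarrow> real) \<Rightarrow> (nat \<Rightarrow> real)" where
  "addv n a b = (\<lambda>i\<in>{..<n}. a i + b i)"

lemma addv_measurable: "(\<lambda>(a,b). addv n a b) \<in> measurable (RR n \<Otimes>\<^sub>M RR n) (RR n)"
  unfolding addv_def RR_def split_beta' by measurable

lemma sample_conv:
  fixes F G :: "real measure"
  assumes F: "prob_space F" and sF: "sets F = sets borel" and G: "prob_space G" and sG: "sets G = sets borel"
  shows "PiM {..<n} (\<lambda>_. convolution F G) = distr (PiM {..<n} (\<lambda>_. F) \<Otimes>\<^sub>M PiM {..<n} (\<lambda>_. G)) (RR n) (\<lambda>(a,b). addv n a b)"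
proof -
  interpret FG: pair_prob_space F G using F G by (simp add: pair_prob_space_def pair_sigma_finite_def prob_space_imp_sigma_finite)
  have pA: "prob_space (PiM {..<n} (\<lambda>_. F))" by (rule prob_space_PiM) (rule F)
  have pB: "prob_space (PiM {..<n} (\<lambda>_. G))" by (rule prob_space_PiM) (rule G)
  interpret PP: pair_prob_space "PiM {..<n} (\<lambda>_. F)" "PiM {..<n} (\<lambda>_. G)"
    by (simp add: pair_prob_space_def pair_sigma_finite_def prob_space_imp_sigma_finite pA pB)
  have pl[measurable]: "(\<lambda>(x::real,y). x + y) \<in> measurable (F \<Otimes>\<^sub>M G) borel"
    by (simp add: measurable_cong_sets[OF sets_pair_measure_cong[OF sF sG] refl])
  define C where "C = convolution F G"
  have pC: "prob_space C" unfolding C_def convolution_def by (rule FG.prob_space_distr) simp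
  have "PiM {..<n} (\<lambda>_. convolution F G) = PiM {..<n} (\<lambda>_. distr (F \<Otimes>\<^sub>M G) C (\<lambda>(x,y). x + y))"
    unfolding convolution_def C_def by (intro PiM_cong refl distr_cong) auto
  also have "\<dots> = distr (PiM {..<n} (\<lambda>_. F \<Otimes>\<^sub>M G)) (PiM {..<n} (\<lambda>_. C)) (compose {..<n} (\<lambda>(x,y). x + y))"
    by (rule distr_PiM_finite_prob_space'[symmetric]) (use pC in \<open>auto simp: FG.prob_space_axioms C_def\<close>)
  also have "\<dots> = distr (PiM {..<n} (\<lambda>_. F \<Otimes>\<^sub>M G)) (RR n) (compose {..<n} (\<lambda>(x,y). x + y))"
    unfolding RR_def by (intro distr_cong refl sets_PiM_cong) (auto simp: C_def)
  also have "PiM {..<n} (\<lambda>_. F \<Otimes>\<^sub>M G) = distr (PiM {..<n} (\<lambda>_. F) \<Otimes>\<^sub>M PiM {..<n} (\<lambda>_. G)) (PiM {..<n} (\<lambda>_. F \<Otimes>\<^sub>M G)) (\<lambda>(a,b). \<lambda>i\<in>{..<n}. (a i, b i))"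
    by (rule zip_PiM[symmetric]) (auto simp: F G sF sG)
  also have "distr \<dots> (RR n) (compose {..<n} (\<lambda>(x,y). x + y)) = distr (PiM {..<n} (\<lambda>_. F) \<Otimes>\<^sub>M PiM {..<n} (\<lambda>_. G)) (RR n) (compose {..<n} (\<lambda>(x,y). x + y) \<circ> (\<lambda>(a,b). \<lambda>i\<in>{..<n}. (a i, b i)))"
  proof (rule distr_distr)
    show "compose {..<n} (\<lambda>(x, y). x + y) \<in> PiM {..<n} (\<lambda>_. F \<Otimes>\<^sub>M G) \<rightarrow>\<^sub>M RR n"
      unfolding RR_def compose_def by measurable
    show "(\<lambda>(a, b). \<lambda>i\<in>{..<n}. (a i, b i)) \<in> PiM {..<n} (\<lambda>_. F) \<Otimes>\<^sub>M PiM {..<n} (\<lambda>_. G) \<rightarrow>\<^sub>M PiM {..<n} (\<lambda>_. F \<Otimes>\<^sub>M G)"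
    proof -
      have e: "(\<lambda>(a, b). \<lambda>i\<in>{..<n}. (a i, b i)) = (\<lambda>x. \<lambda>i\<in>{..<n}. (fst x i :: real, snd x i :: real))" by auto
      show ?thesis unfolding e by measurable
    qed
  qed
  also have "compose {..<n} (\<lambda>(x,y). x + y) \<circ> (\<lambda>(a,b). \<lambda>i\<in>{..<n}. (a i, b i)) = (\<lambda>(a,b). addv n a b)"
    by (auto simp: compose_def addv_def fun_eq_iff)
  finally show ?thesis .
qed

lemma conv_return0:
  fixes H :: "real measure"
  assumes H: "prob_space H" and sH: "sets H = sets borel"
  shows "convolution (return borel 0) H = H"
proof (rule measure_eqI)
  show "sets (convolution (return borel 0) H) = sets H" by (simp add: sH)
  fix A assume "A \<in> sets (convolution (return borel 0) H)"
  then have A: "A \<in> sets borel" by simp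
  interpret H: prob_space H by fact
  have "emeasure (convolution (return borel 0) H) A = (\<integral>\<^sup>+x. \<integral>\<^sup>+y. indicator A (x + y) \<partial>H \<partial>return borel 0)"
    by (rule convolution_emeasure') (auto simp: A sH H.finite_measure_axioms intro!: prob_space.finite_measure prob_space_return)
  also have "\<dots> = (\<integral>\<^sup>+y. indicator A (0 + y) \<partial>H)"
  proof (rule nn_integral_return)
    have [measurable]: "A \<in> sets borel" by fact
    have "(\<lambda>(x,y). indicator A (x + y) :: ennreal) \<in> borel_measurable (borel \<Otimes>\<^sub>M H)"
      unfolding measurable_cong_sets[OF sets_pair_measure_cong[OF refl sH] refl] by measurable
    then show "(\<lambda>x. \<integral>\<^sup>+y. indicator A (x + y) \<partial>H) \<in> borel_measurable borel"
      by (rule H.borel_measurable_nn_integral[of "\<lambda>x y. indicator A (x + y)", simplified])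
  qed simp
  also have "\<dots> = emeasure H A" using A sH by (simp add: nn_integral_indicator)
  finally show "emeasure (convolution (return borel 0) H) A = emeasure H A" .
qed



lemma conv_pow_dist:
  assumes H: "prob_space H" "sets H = sets borel"
  shows "prob_space (conv_pow H m) \<and> sets (conv_pow H m) = sets borel"
proof (induction m rule: less_induct)
  case (less m)
  show ?case
  proof (cases m)
    case 0 then show ?thesis by (auto intro: prob_space_return)
  next
    case (Suc m')
    show ?thesis
    proof (cases m')
      case 0 then show ?thesis using Suc H by simp
    next
      case (Suc k)
      have IH: "prob_space (conv_pow H (Suc k)) \<and> sets (conv_pow H (Suc k)) = sets borel"
        using less.IH[of "Suc k"] Suc \<open>m = Suc m'\<close> by simp
      interpret P: pair_prob_space "conv_pow H (Suc k)" H
        using IH H by (simp add: pair_prob_space_def pair_sigma_finite_def prob_space_imp_sigma_finite)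
      have "prob_space (convolution (conv_pow H (Suc k)) H)"
      proof -
        have m1: "(\<lambda>(x::real,y). x + y) \<in> measurable (borel \<Otimes>\<^sub>M borel) borel" by measurable
        have "(\<lambda>(x::real,y). x + y) \<in> measurable (conv_pow H (Suc k) \<Otimes>\<^sub>M H) borel"
          by (subst measurable_cong_sets[OF sets_pair_measure_cong[OF conjunct2[OF IH] H(2)] refl]) (rule m1)
        then show ?thesis unfolding convolution_def by (rule P.prob_space_distr)
      qed
      then show ?thesis using Suc \<open>m = Suc m'\<close> by simp
    qed
  qed
qed

lemma PP_succ:
  assumes H: "prob_space H" "sets H = sets borel"
  shows "sample n (conv_pow H (Suc m)) = distr (sample n (conv_pow H m) \<Otimes>\<^sub>M sample n H) (RR n) (\<lambda>(a,b). addv n a b)"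
proof (cases m)
  case 0
  have "sample n (conv_pow H (Suc m)) = PiM {..<n} (\<lambda>_. convolution (return borel 0) H)"
    using 0 conv_return0[OF H] by (simp add: sample_def)
  also have "\<dots> = distr (sample n (conv_pow H m) \<Otimes>\<^sub>M sample n H) (RR n) (\<lambda>(a,b). addv n a b)"
    unfolding sample_def 0 by (subst sample_conv) (auto simp: H intro: prob_space_return)
  finally show ?thesis .
next
  case (Suc k)
  show ?thesis unfolding Suc sample_def conv_pow.simps
    by (rule sample_conv) (use conv_pow_dist[OF H] H in auto)
qed

lemma conv_pow_sq:
  assumes H: "prob_space H" "sets H = sets borel" and H2: "integrable H (\<lambda>x. x\<^sup>2)"
  shows "integrable (conv_pow H m) (\<lambda>x. x\<^sup>2)"
proof (induction m rule: less_induct)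
  case (less m)
  show ?case
  proof (cases m)
    case 0
    have "(\<integral>\<^sup>+x. ennreal (x\<^sup>2) \<partial>return borel 0) < \<infinity>" by (subst nn_integral_return) auto
    then show ?thesis using 0 by (simp add: integrable_iff_bounded)
  next
    case (Suc m')
    show ?thesis
    proof (cases m')
      case 0 then show ?thesis using Suc H2 by simp
    next
      case (Suc k)
      have 3: "integrable (conv_pow H (Suc k)) (\<lambda>x. x\<^sup>2)"
        using less.IH[of "Suc k"] Suc \<open>m = Suc m'\<close> by simp
  define F where "F = conv_pow H (Suc k)"
  have F: "prob_space F" "sets F = sets borel" using conv_pow_dist[OF H, of "Suc k"] by (auto simp: F_def)
  interpret F: prob_space F by (rule F(1))
  interpret H: prob_space H by (rule H(1))
  have Fi: "integrable F (\<lambda>x. x\<^sup>2)" using 3 by (simp add: F_def)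
  have Ffin: "(\<integral>\<^sup>+x. ennreal (2 * x\<^sup>2) \<partial>F) < \<infinity>"
    using Fi by (simp add: integrable_iff_bounded measurable_cong_sets[OF F(2) refl] ennreal_mult nn_integral_cmult ennreal_mult_less_top)
  have Hfin: "(\<integral>\<^sup>+x. ennreal (2 * x\<^sup>2) \<partial>H) < \<infinity>"
    using H2 by (simp add: integrable_iff_bounded measurable_cong_sets[OF H(2) refl] ennreal_mult nn_integral_cmult ennreal_mult_less_top)
  have "(\<integral>\<^sup>+x. ennreal (x\<^sup>2) \<partial>convolution F H) = (\<integral>\<^sup>+x. \<integral>\<^sup>+y. ennreal ((x + y)\<^sup>2) \<partial>H \<partial>F)"
    by (rule nn_integral_convolution) (auto simp: F H F.finite_measure_axioms H.finite_measure_axioms)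
  also have "\<dots> \<le> (\<integral>\<^sup>+x. \<integral>\<^sup>+y. ennreal (2 * x\<^sup>2) + ennreal (2 * y\<^sup>2) \<partial>H \<partial>F)"
  proof (intro nn_integral_mono)
    fix x y :: real
    have "(x + y)\<^sup>2 \<le> 2 * x\<^sup>2 + 2 * y\<^sup>2" using sum_squares_ge_zero[of "x - y" 0] by (simp add: power2_eq_square algebra_simps)
    then show "ennreal ((x + y)\<^sup>2) \<le> ennreal (2 * x\<^sup>2) + ennreal (2 * y\<^sup>2)"
      by (simp add: ennreal_plus[symmetric] del: ennreal_plus)
  qed
  also have "\<dots> = (\<integral>\<^sup>+x. ennreal (2 * x\<^sup>2) + (\<integral>\<^sup>+y. ennreal (2 * y\<^sup>2) \<partial>H) \<partial>F)"
    by (intro nn_integral_cong, subst nn_integral_add) (auto simp: measurable_cong_sets[OF H(2) refl] H.emeasure_space_1)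
  also have "\<dots> = (\<integral>\<^sup>+x. ennreal (2 * x\<^sup>2) \<partial>F) + (\<integral>\<^sup>+y. ennreal (2 * y\<^sup>2) \<partial>H)"
    by (subst nn_integral_add) (auto simp: measurable_cong_sets[OF F(2) refl] F.emeasure_space_1)
  also have "\<dots> < \<infinity>" using Ffin Hfin by (simp add: less_top[symmetric] ennreal_add_eq_top)
  finally have "(\<integral>\<^sup>+x. ennreal (x\<^sup>2) \<partial>convolution F H) < \<infinity>" .
  then show ?thesis unfolding F_def Suc \<open>m = Suc m'\<close> conv_pow.simps by (simp add: integrable_iff_bounded)
    qed
  qed
qed

primrec ffun :: "nat \<Rightarrow> (nat \<Rightarrow> real) measure \<Rightarrow> ((nat \<Rightarrow> real) \<Rightarrow> real) \<Rightarrow> nat \<Rightarrow> (nat \<Rightarrow> real) \<Rightarrow> real" where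
  "ffun n Q t 0 = t"
| "ffun n Q t (Suc j) = (\<lambda>z. if integrable Q (\<lambda>y. ffun n Q t j (addv n z y)) then (\<integral>y. ffun n Q t j (addv n z y) \<partial>Q) else z 0)"

lemma addv_meas[measurable (raw)]:
  assumes [measurable]: "a \<in> measurable N (RR n)" "b \<in> measurable N (RR n)"
  shows "(\<lambda>x. addv n (a x) (b x)) \<in> measurable N (RR n)"
  using measurable_compose[OF measurable_Pair[OF assms] addv_measurable] by simp

lemma addv_space: "addv n a b \<in> space (RR n)"
  by (simp add: addv_def RR_def space_PiM)

lemma ffun_meas:
  assumes Q: "prob_space Q" and sQ[measurable_cong]: "sets Q = sets (RR n)" and n: "0 < n"
    and tm[measurable]: "t \<in> borel_measurable (RR n)"
  shows "ffun n Q t j \<in> borel_measurable (RR n)"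
proof (induction j)
  case 0 then show ?case by simp
next
  case (Suc j)
  interpret Q: prob_space Q by fact
  have gm[measurable]: "ffun n Q t j \<in> borel_measurable (RR n)" by fact
  have c0[measurable]: "(\<lambda>z::nat\<Rightarrow>real. z 0) \<in> borel_measurable (RR n)"
    unfolding RR_def using n by (intro measurable_component_singleton) auto
  have "(\<lambda>z. if (\<integral>\<^sup>+y. ennreal (norm (ffun n Q t j (addv n z y))) \<partial>Q) < \<infinity> then (\<integral>y. ffun n Q t j (addv n z y) \<partial>Q) else z 0) \<in> borel_measurable (RR n)"
    by measurable
  moreover have "z \<in> space (RR n) \<Longrightarrow> (if (\<integral>\<^sup>+y. ennreal (norm (ffun n Q t j (addv n z y))) \<partial>Q) < \<infinity> then (\<integral>y. ffun n Q t j (addv n z y) \<partial>Q) else z 0) = ffun n Q t (Suc j) z" for z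
    by (simp add: integrable_iff_bounded)
  ultimately show ?case using measurable_cong by (smt (verit) measurable_cong)
qed

lemma ffun1_equiv:
  assumes Q: "prob_space Q" and sQ[measurable_cong]: "sets Q = sets (RR n)" and n: "0 < n"
    and tm[measurable]: "t \<in> borel_measurable (RR n)" and te: "equivariant n t"
  shows "equivariant n (ffun n Q t (Suc 0))"
  unfolding equivariant_def
proof (intro ballI allI)
  interpret Q: prob_space Q by fact
  fix x :: "nat \<Rightarrow> real" and c :: real
  assume x: "x \<in> space (PiM {..<n} (\<lambda>_. (borel :: real measure)))"
  define x' where "x' = restrict (\<lambda>i. x i + c) {..<n}"
  have sh: "t (addv n x' y) = t (addv n x y) + c" for y
  proof -
    have "addv n x' y = restrict (\<lambda>i. addv n x y i + c) {..<n}"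
      by (auto simp: x'_def addv_def fun_eq_iff)
    then show ?thesis using te addv_space[of n x y] unfolding equivariant_def RR_def by simp
  qed
  have xs: "x \<in> space (RR n)" using x by (simp add: RR_def)
  have "(\<lambda>y. t (addv n x y)) \<in> borel_measurable (RR n)" using xs by measurable
  have ieq: "integrable Q (\<lambda>y. t (addv n x' y)) \<longleftrightarrow> integrable Q (\<lambda>y. t (addv n x y))"
  proof
    assume "integrable Q (\<lambda>y. t (addv n x' y))"
    then have "integrable Q (\<lambda>y. t (addv n x' y) - c)" by simp
    then show "integrable Q (\<lambda>y. t (addv n x y))" unfolding sh by simp
  next
    assume "integrable Q (\<lambda>y. t (addv n x y))"
    then have "integrable Q (\<lambda>y. t (addv n x y) + c)" by simp
    then show "integrable Q (\<lambda>y. t (addv n x' y))" unfolding sh by simp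
  qed
  show "ffun n Q t (Suc 0) (restrict (\<lambda>i. x i + c) {..<n}) = ffun n Q t (Suc 0) x + c"
  proof (cases "integrable Q (\<lambda>y. t (addv n x y))")
    case True
    have "(\<integral>y. t (addv n x' y) \<partial>Q) = (\<integral>y. t (addv n x y) + c \<partial>Q)" unfolding sh ..
    also have "\<dots> = (\<integral>y. t (addv n x y) \<partial>Q) + c" using True by (simp add: Q.prob_space)
    finally show ?thesis using True ieq unfolding x'_def by simp
  next
    case False
    then show ?thesis using ieq n unfolding x'_def by simp
  qed
qed

lemma key:
  fixes H :: "real measure" and t :: "(nat \<Rightarrow> real) \<Rightarrow> real"
  assumes Hp: "prob_space H" "sets H = sets borel" and n: "0 < n" and N: "N > 1"
    and tm: "t \<in> borel_measurable (RR n)" and te: "equivariant n t"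
    and ti: "integrable (sample n (conv_pow H N)) (\<lambda>x. (t x)\<^sup>2)"
  shows "ffun n (sample n H) t (Suc 0) \<in> borel_measurable (RR n)"
    "equivariant n (ffun n (sample n H) t (Suc 0))"
    "integrable (sample n (conv_pow H (N - 1))) (\<lambda>x. (ffun n (sample n H) t (Suc 0) x)\<^sup>2)"
    "real N * prob_space.variance (sample n (conv_pow H (N - 1))) (ffun n (sample n H) t (Suc 0))
       \<le> real (N - 1) * prob_space.variance (sample n (conv_pow H N)) t"
proof -
  define Q where "Q = sample n H"
  define PP where "PP m = sample n (conv_pow H m)" for m
  define F where "F j = ffun n Q t j" for j
  have PPp: "prob_space (PP m)" "sets (PP m) = sets (RR n)" for m
  proof -
    have d: "prob_space (conv_pow H m)" "sets (conv_pow H m) = sets borel" using conv_pow_dist[OF Hp] by auto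
    show "prob_space (PP m)" unfolding PP_def sample_def by (rule prob_space_PiM) (rule d(1))
    show "sets (PP m) = sets (RR n)" unfolding PP_def sample_def RR_def by (rule sets_PiM_cong) (auto simp: d(2))
  qed
  have QPP: "Q = PP 1" by (simp add: Q_def PP_def)
  have Qp: "prob_space Q" "sets Q = sets (RR n)" unfolding QPP by (rule PPp)+
  have PPs: "PP (Suc m) = distr (PP m \<Otimes>\<^sub>M Q) (RR n) (\<lambda>(a,b). addv n a b)" for m
    unfolding PP_def Q_def by (rule PP_succ[OF Hp])
  have Fm: "F j \<in> borel_measurable (RR n)" for j unfolding F_def by (rule ffun_meas[OF Qp n tm])
  have comm: "addv n (addv n z y) y' = addv n (addv n z y') y" for z y y'
    by (auto simp: addv_def fun_eq_iff)
  have step: "(AE w in PP (N - Suc j). F (Suc j) w = (\<integral>y. F j (addv n w y) \<partial>Q)) \<and> integrable (PP (N - Suc j)) (\<lambda>x. (F (Suc j) x)\<^sup>2)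
      \<and> (\<integral>x. F j x \<partial>PP (N - j)) = (\<integral>x. F (Suc j) x \<partial>PP (N - Suc j))"
    if j: "j < N" and ij: "integrable (PP (N - j)) (\<lambda>x. (F j x)\<^sup>2)" for j
  proof -
    have e: "PP (N - j) = distr (PP (N - Suc j) \<Otimes>\<^sub>M Q) (RR n) (\<lambda>(a,b). addv n a b)"
      using PPs[of "N - Suc j"] j by (simp add: Suc_diff_Suc)
    note tl = twolevel[OF PPp(1) Qp(1) PPp(2) Qp(2) addv_measurable Fm, of "N - Suc j" j, OF ij[unfolded e]]
    have ae: "AE w in PP (N - Suc j). F (Suc j) w = (\<integral>y. F j (addv n w y) \<partial>Q)"
      using tl(1) by eventually_elim (simp add: F_def)
    show ?thesis using tl(2)[OF Fm ae] tl(3)[OF Fm ae] ae e by simp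
  qed
  have ints: "j \<le> N \<Longrightarrow> integrable (PP (N - j)) (\<lambda>x. (F j x)\<^sup>2)" for j
  proof (induction j)
    case 0 then show ?case using ti by (simp add: F_def PP_def)
  next
    case (Suc j) then show ?case using step[of j] by simp
  qed
  have aes: "j < N \<Longrightarrow> AE w in PP (N - Suc j). F (Suc j) w = (\<integral>y. F j (addv n w y) \<partial>Q)" for j
    using step ints by simp
  have means: "j < N \<Longrightarrow> (\<integral>x. F j x \<partial>PP (N - j)) = (\<integral>x. F (Suc j) x \<partial>PP (N - Suc j))" for j
    using step ints by simp
  define s where "s m = (\<integral>x. (F (N - m) x)\<^sup>2 \<partial>PP m)" for m
  define mu where "mu m = (\<integral>x. F (N - m) x \<partial>PP m)" for m
  have nnint: "(\<integral>\<^sup>+x. ennreal ((F (N - m) x)\<^sup>2) \<partial>PP m) = ennreal (s m)" if "m \<le> N" for m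
  proof -
    have "integrable (PP m) (\<lambda>x. (F (N - m) x)\<^sup>2)" using ints[of "N - m"] that by simp
    then show ?thesis unfolding s_def by (rule nn_integral_eq_integral) auto
  qed
  have s_nonneg: "0 \<le> s m" for m unfolding s_def by simp
  have convex: "2 * s m \<le> s (Suc m) + s (m - 1)" if m1: "1 \<le> m" and mN: "m < N" for m
  proof -
    define a where "a = N - Suc m"
    have a1: "N - m = Suc a" "N - Suc m = a" "N - (m - 1) = Suc (Suc a)" using m1 mN by (auto simp: a_def)
    have PPm: "distr (PP (m - 1) \<Otimes>\<^sub>M Q) (RR n) (\<lambda>(a,b). addv n a b) = PP m" using PPs[of "m - 1"] m1 by simp
    have PPm1: "distr (PP m \<Otimes>\<^sub>M Q) (RR n) (\<lambda>(a,b). addv n a b) = PP (Suc m)" using PPs[of m] by simp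
    have aN: "a < N" "N - a = Suc m" "N - Suc a = m" using mN by (auto simp: a_def)
    have Fi: "integrable (PP (Suc m)) (\<lambda>x. (F a x)\<^sup>2)" using ints[of a] aN by simp
    have fae: "AE w in PP m. F (Suc a) w = (\<integral>y. F a (addv n w y) \<partial>Q)" using aes[of a, OF aN(1)] unfolding aN(3) .
    have gae: "AE z in PP (m - 1). F (Suc (Suc a)) z = (\<integral>y. F (Suc a) (addv n z y) \<partial>Q)"
    proof -
      have "Suc a < N" "N - Suc (Suc a) = m - 1" using mN m1 by (auto simp: a_def)
      then show ?thesis using aes[of "Suc a"] by (simp only:)
    qed
    have c: "2 * (\<integral>\<^sup>+w. ennreal ((F (Suc a) w)\<^sup>2) \<partial>PP m) \<le> (\<integral>\<^sup>+w. ennreal ((F a w)\<^sup>2) \<partial>PP (Suc m)) + (\<integral>\<^sup>+z. ennreal ((F (Suc (Suc a)) z)\<^sup>2) \<partial>PP (m - 1))"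
      using core[OF PPp(1) Qp(1) PPp(2) Qp(2) addv_measurable comm Fm Fm Fm, of "m - 1" a "Suc a" "Suc (Suc a)"]
        Fi fae gae unfolding PPm PPm1 by simp
    have n1: "(\<integral>\<^sup>+w. ennreal ((F (Suc a) w)\<^sup>2) \<partial>PP m) = ennreal (s m)"
      using nnint[of m] mN unfolding a1(1) by simp
    have n2: "(\<integral>\<^sup>+w. ennreal ((F a w)\<^sup>2) \<partial>PP (Suc m)) = ennreal (s (Suc m))"
      using nnint[of "Suc m"] mN unfolding a1(2) by simp
    have n3: "(\<integral>\<^sup>+w. ennreal ((F (Suc (Suc a)) w)\<^sup>2) \<partial>PP (m - 1)) = ennreal (s (m - 1))"
      using nnint[of "m - 1"] mN unfolding a1(3) by simp
    have c2: "2 * ennreal (s m) \<le> ennreal (s (Suc m)) + ennreal (s (m - 1))" using c unfolding n1 n2 n3 .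
    have "ennreal (2 * s m) \<le> ennreal (s (Suc m) + s (m - 1))"
      using c2 by (simp add: ennreal_mult ennreal_plus[symmetric] s_nonneg del: ennreal_plus)
    then show ?thesis
      by (subst (asm) ennreal_le_iff) (auto simp: s_nonneg add_nonneg_nonneg)
  qed
  have PP0: "PP 0 = return (RR n) (\<lambda>i\<in>{..<n}. 0)"
    unfolding PP_def sample_def RR_def conv_pow.simps by (rule PiM_return) auto
  have sp0: "(\<lambda>i\<in>{..<n}. 0::real) \<in> space (RR n)" by (simp add: RR_def space_PiM)
  have s0: "s 0 = (mu 0)\<^sup>2"
    unfolding s_def mu_def PP0 using Fm sp0 by (simp add: integral_return)
  have mu_const: "k \<le> N \<Longrightarrow> mu (N - k) = mu N" for k
  proof (induction k)
    case 0 then show ?case by simp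
  next
    case (Suc k)
    have "mu (N - Suc k) = mu (N - k)"
      using means[of k] Suc.prems by (simp add: mu_def Suc_diff_Suc)
    then show ?case using Suc by simp
  qed
  have cs: "real N * (s (N - 1) - s 0) \<le> real (N - 1) * (s N - s 0)"
    by (rule convex_seq[OF N convex]) auto
  interpret PN: prob_space "PP N" by (rule PPp)
  interpret PN1: prob_space "PP (N - 1)" by (rule PPp)
  have iN2: "integrable (PP N) (\<lambda>x. (t x)\<^sup>2)" using ti by (simp add: PP_def)
  have iN: "integrable (PP N) t"
    by (rule PN.square_integrable_imp_integrable[OF _ iN2]) (use tm in \<open>simp add: measurable_cong_sets[OF PPp(2) refl]\<close>)
  have f1m: "F 1 \<in> borel_measurable (PP (N - 1))" using Fm[of 1] by (simp add: measurable_cong_sets[OF PPp(2) refl])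
  have iN12: "integrable (PP (N - 1)) (\<lambda>x. (F 1 x)\<^sup>2)" using ints[of 1] N by simp
  have iN1: "integrable (PP (N - 1)) (F 1)" by (rule PN1.square_integrable_imp_integrable[OF f1m iN12])
  have vN: "PN.variance t = s N - (mu N)\<^sup>2"
    using PN.variance_eq[OF iN iN2] by (simp add: s_def mu_def F_def)
  have vN1: "PN1.variance (F 1) = s (N - 1) - (mu (N - 1))\<^sup>2"
    using PN1.variance_eq[OF iN1 iN12] N by (simp add: s_def mu_def)
  have mus: "mu (N - 1) = mu N" "mu 0 = mu N" using mu_const[of 1] mu_const[of N] N by auto
  show "ffun n (sample n H) t (Suc 0) \<in> borel_measurable (RR n)" using Fm[of 1] by (simp add: F_def Q_def)
  show "equivariant n (ffun n (sample n H) t (Suc 0))"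
    using ffun1_equiv[OF Qp n tm te] by (simp add: Q_def)
  show "integrable (sample n (conv_pow H (N - 1))) (\<lambda>x. (ffun n (sample n H) t (Suc 0) x)\<^sup>2)"
    using iN12 by (simp add: PP_def F_def Q_def)
  show "real N * prob_space.variance (sample n (conv_pow H (N - 1))) (ffun n (sample n H) t (Suc 0))
       \<le> real (N - 1) * prob_space.variance (sample n (conv_pow H N)) t"
    using cs vN vN1 mus s0 by (simp add: PP_def F_def Q_def)
qed

theorem corollary1:
  fixes H :: "real measure" and N n :: nat
  assumes "real_distribution H"
    and "integrable H (\<lambda>x. x\<^sup>2)"
    and "N > 1" and "n \<ge> 1"
  shows "pitman_var n (conv_pow H N) / real N \<ge> pitman_var n (conv_pow H (N - 1)) / real (N - 1)"
proof -
  interpret H: real_distribution H by fact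
  have Hp: "prob_space H" "sets H = sets borel" by (rule H.prob_space_axioms) simp
  have n: "0 < n" using assms(4) by simp
  have N: "N > 1" by fact
  define S where "S m = {prob_space.variance (sample n (conv_pow H m)) t | t.
      t \<in> borel_measurable (sample n (conv_pow H m)) \<and> equivariant n t \<and>
      integrable (sample n (conv_pow H m)) (\<lambda>x. (t x)\<^sup>2)}" for m
  have pv: "pitman_var n (conv_pow H m) = Inf (S m)" for m by (simp add: pitman_var_def S_def)
  have sp: "prob_space (sample n (conv_pow H m))" "sets (sample n (conv_pow H m)) = sets (RR n)" for m
  proof -
    have d: "prob_space (conv_pow H m)" "sets (conv_pow H m) = sets borel" using conv_pow_dist[OF Hp] by auto
    show "prob_space (sample n (conv_pow H m))" unfolding sample_def by (rule prob_space_PiM) (rule d(1))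
    show "sets (sample n (conv_pow H m)) = sets (RR n)" unfolding sample_def RR_def by (rule sets_PiM_cong) (auto simp: d(2))
  qed
  have bdd: "bdd_below (S m)" for m
  proof -
    interpret P: prob_space "sample n (conv_pow H m)" by (rule sp)
    show ?thesis unfolding S_def by (rule bdd_belowI[of _ 0]) (auto intro: P.variance_positive)
  qed
  have ne: "S N \<noteq> {}"
  proof -
    have c0: "(\<lambda>z::nat\<Rightarrow>real. z 0) \<in> borel_measurable (RR n)"
      unfolding RR_def using n by (intro measurable_component_singleton) auto
    have m0: "(\<lambda>z::nat\<Rightarrow>real. z 0) \<in> borel_measurable (sample n (conv_pow H N))"
      using c0 by (simp add: measurable_cong_sets[OF sp(2) refl])
    have e0: "equivariant n (\<lambda>z::nat\<Rightarrow>real. z 0)" unfolding equivariant_def using n by simp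
    have dc: "distr (sample n (conv_pow H N)) (conv_pow H N) (\<lambda>\<omega>. \<omega> 0) = conv_pow H N"
      unfolding sample_def by (rule distr_PiM_component) (use conv_pow_dist[OF Hp] n in auto)
    have mc: "(\<lambda>\<omega>::nat\<Rightarrow>real. \<omega> 0) \<in> measurable (sample n (conv_pow H N)) (conv_pow H N)"
      unfolding sample_def using n by (intro measurable_component_singleton) auto
    have "integrable (distr (sample n (conv_pow H N)) (conv_pow H N) (\<lambda>\<omega>. \<omega> 0)) (\<lambda>x::real. x\<^sup>2)"
      unfolding dc by (rule conv_pow_sq[OF Hp assms(2)])
    then have i0: "integrable (sample n (conv_pow H N)) (\<lambda>z::nat\<Rightarrow>real. (z 0)\<^sup>2)"
    proof (subst (asm) integrable_distr_eq[OF mc])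
      show "(\<lambda>x::real. x\<^sup>2) \<in> borel_measurable (conv_pow H N)"
        by (subst measurable_cong_sets[OF conjunct2[OF conv_pow_dist[OF Hp, of N]] refl]) simp
    qed
    show ?thesis unfolding S_def using m0 e0 i0 by blast
  qed
  have main: "real N * Inf (S (N - 1)) / real (N - 1) \<le> v" if v: "v \<in> S N" for v
  proof -
    obtain t where t: "v = prob_space.variance (sample n (conv_pow H N)) t"
      "t \<in> borel_measurable (sample n (conv_pow H N))" "equivariant n t"
      "integrable (sample n (conv_pow H N)) (\<lambda>x. (t x)\<^sup>2)"
      using v unfolding S_def by blast
    have tm: "t \<in> borel_measurable (RR n)" using t(2) by (simp add: measurable_cong_sets[OF sp(2) refl])
    note k = key[OF Hp n N tm t(3) t(4)]
    have "prob_space.variance (sample n (conv_pow H (N - 1))) (ffun n (sample n H) t (Suc 0)) \<in> S (N - 1)"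
      unfolding S_def using k(1-3) by (auto simp: measurable_cong_sets[OF sp(2) refl])
    then have "Inf (S (N - 1)) \<le> prob_space.variance (sample n (conv_pow H (N - 1))) (ffun n (sample n H) t (Suc 0))"
      by (rule cInf_lower) (rule bdd)
    then have "real N * Inf (S (N - 1)) \<le> real (N - 1) * v"
      using k(4) t(1) by (smt (verit) mult_left_mono of_nat_0_le_iff)
    then show ?thesis using N by (simp add: divide_le_eq mult.commute)
  qed
  have "real N * Inf (S (N - 1)) / real (N - 1) \<le> Inf (S N)"
    by (rule cInf_greatest[OF ne main])
  then show ?thesis unfolding pv using N
    by (simp add: divide_le_eq le_divide_eq mult.commute)
qed

end
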